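(* Let $G=(V,E)$ be a finite, undirected, connected, vertex-transitive graph with unit edge weights and vertex set $V=\{v_1,\dots,v_N\}$, let $L=D-A$ be its graph Laplacian, and let $\phi_{\lambda_1},\dots,\phi_{\lambda_N}$ be an orthonormal basis of $\mathbb{C}^N$ of eigenvectors of $L$. For $t\ge 0$ let $H_t=e^{-tL}$, $D_i(t)=\operatorname{diag}(H_t(\cdot,v_i))$ and $\psi_{ij}(t)=D_i(t)\phi_{\lambda_j}$. Then for every $t\in[0,\infty)$ the family $\{\psi_{ij}(t)\}_{i,j=1}^N$ is a tight frame for $\mathbb{C}^N$.
   Context: $L=D-A$ with $A$ the adjacency matrix and $D$ the diagonal degree matrix. $H_t(\cdot,v_i)$ is the $i$-th column of $H_t$ and $\operatorname{diag}(x)$ the diagonal matrix with diagonal $x$. An automorphism of $G$ is a permutation $\pi$ of $V$ with $(u,v)\in E$ iff $(\pi(u),\pi(v))\in E$; $G$ is vertex-transitive if for all $u,v\in V$ there is an automorphism $\pi$ with $\pi(u)=v$. A frame $\{\psi_k\}$ for $\mathbb{C}^N$ is tight if there is $A>0$ with $\sum_k|\langle f,\psi_k\rangle|^2=A\|f\|^2$ for all $f\in\mathbb{C}^N$. *)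

theory Defs
  imports "HOL-Analysis.Analysis"
begin

definition simple_graph :: "('n \<Rightarrow> 'n \<Rightarrow> bool) \<Rightarrow> bool" where
  "simple_graph E \<longleftrightarrow> (\<forall>u v. E u v \<longrightarrow> E v u) \<and> (\<forall>u. \<not> E u u)"

definition graph_connected :: "('n \<Rightarrow> 'n \<Rightarrow> bool) \<Rightarrow> bool" where
  "graph_connected E \<longleftrightarrow> (\<forall>u v. E\<^sup>*\<^sup>* u v)"

definition graph_automorphism :: "('n \<Rightarrow> 'n \<Rightarrow> bool) \<Rightarrow> ('n \<Rightarrow> 'n) \<Rightarrow> bool" where
  "graph_automorphism E \<pi> \<longleftrightarrow> bij \<pi> \<and> (\<forall>u v. E u v \<longleftrightarrow> E (\<pi> u) (\<pi> v))"

definition vertex_transitive :: "('n \<Rightarrow> 'n \<Rightarrow> bool) \<Rightarrow> bool" where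
  "vertex_transitive E \<longleftrightarrow> (\<forall>u v. \<exists>\<pi>. graph_automorphism E \<pi> \<and> \<pi> u = v)"

definition adj_matrix :: "('n::finite \<Rightarrow> 'n \<Rightarrow> bool) \<Rightarrow> real^'n^'n" where
  "adj_matrix E = (\<chi> u v. if E u v then 1 else 0)"

definition deg_matrix :: "('n::finite \<Rightarrow> 'n \<Rightarrow> bool) \<Rightarrow> real^'n^'n" where
  "deg_matrix E = (\<chi> u v. if u = v then real (card {w. E u w}) else 0)"

definition laplacian :: "('n::finite \<Rightarrow> 'n \<Rightarrow> bool) \<Rightarrow> real^'n^'n" where
  "laplacian E = deg_matrix E - adj_matrix E"

primrec mat_pow :: "real^'n^'n \<Rightarrow> nat \<Rightarrow> real^'n^'n" where
  "mat_pow A 0 = mat 1"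
| "mat_pow A (Suc k) = A ** mat_pow A k"

definition mat_exp :: "real^'n^'n \<Rightarrow> real^'n^'n" where
  "mat_exp A = (\<Sum>k. (1 / fact k) *\<^sub>R mat_pow A k)"

definition heat_kernel :: "('n::finite \<Rightarrow> 'n \<Rightarrow> bool) \<Rightarrow> real \<Rightarrow> real^'n^'n" where
  "heat_kernel E t = mat_exp ((- t) *\<^sub>R laplacian E)"

definition cinner :: "complex^'n \<Rightarrow> complex^'n \<Rightarrow> complex" where
  "cinner f g = (\<Sum>k\<in>UNIV. f $ k * cnj (g $ k))"

definition cnorm :: "complex^'n \<Rightarrow> real" where
  "cnorm f = sqrt (\<Sum>k\<in>UNIV. (cmod (f $ k))\<^sup>2)"

definition cmat_vec :: "real^'n^'m \<Rightarrow> complex^'n \<Rightarrow> complex^'m" where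
  "cmat_vec M x = (\<chi> i. \<Sum>j\<in>UNIV. complex_of_real (M $ i $ j) * x $ j)"

definition diag_vec :: "real^'n \<Rightarrow> real^'n^'n" where
  "diag_vec x = (\<chi> i j. if i = j then x $ i else 0)"

definition column :: "real^'n^'m \<Rightarrow> 'n \<Rightarrow> real^'m" where
  "column M j = (\<chi> i. M $ i $ j)"

definition orthonormal_basis :: "('n::finite \<Rightarrow> complex^'n) \<Rightarrow> bool" where
  "orthonormal_basis \<phi> \<longleftrightarrow> (\<forall>i j. cinner (\<phi> i) (\<phi> j) = (if i = j then 1 else 0))"

definition tight_frame :: "('i \<Rightarrow> complex^'n) \<Rightarrow> 'i set \<Rightarrow> bool" where
  "tight_frame \<psi> I \<longleftrightarrow> (\<exists>A>0. \<forall>f. (\<Sum>k\<in>I. (cmod (cinner f (\<psi> k)))\<^sup>2) = A * (cnorm f)\<^sup>2)"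

end

theory Submission imports Defs begin

lemma mat_pow_bound:
  fixes A :: "real^'n::finite^'n"
  shows "\<bar>mat_pow A k $ i $ j\<bar> \<le> (\<Sum>a\<in>UNIV. \<Sum>b\<in>UNIV. \<bar>A$a$b\<bar>) ^ k"
proof (induction k arbitrary: i j)
  case 0
  then show ?case by (simp add: mat_def)
next
  case (Suc k)
  define m where "m = (\<Sum>a\<in>UNIV. \<Sum>b\<in>UNIV. \<bar>A$a$b\<bar>)"
  have rowle: "(\<Sum>l\<in>UNIV. \<bar>A$i$l\<bar>) \<le> m"
    unfolding m_def by (rule member_le_sum) (auto intro: sum_nonneg)
  have "\<bar>mat_pow A (Suc k) $ i $ j\<bar> = \<bar>\<Sum>l\<in>UNIV. A$i$l * mat_pow A k $ l $ j\<bar>"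
    by (simp add: matrix_matrix_mult_def)
  also have "\<dots> \<le> (\<Sum>l\<in>UNIV. \<bar>A$i$l\<bar> * m ^ k)"
    apply (rule order_trans[OF sum_abs])
    apply (rule sum_mono)
    using Suc.IH unfolding m_def by (simp add: abs_mult mult_left_mono)
  also have "\<dots> = (\<Sum>l\<in>UNIV. \<bar>A$i$l\<bar>) * m ^ k" by (simp add: sum_distrib_right)
  also have "\<dots> \<le> m * m ^ k"
    using rowle by (intro mult_right_mono) (auto simp: m_def intro!: zero_le_power sum_nonneg)
  finally show ?case by (simp add: m_def)
qed

lemma norm_mat_le: "norm (M :: real^'n::finite^'m::finite) \<le> (\<Sum>a\<in>UNIV. \<Sum>b\<in>UNIV. \<bar>M$a$b\<bar>)"
proof -
  have "norm M \<le> (\<Sum>a\<in>UNIV. norm (M$a))" by (simp add: norm_vec_def L2_set_le_sum)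
  also have "\<dots> \<le> (\<Sum>a\<in>UNIV. \<Sum>b\<in>UNIV. \<bar>M$a$b\<bar>)"
    by (intro sum_mono) (metis norm_le_l1_cart real_norm_def)
  finally show ?thesis .
qed

lemma mat_exp_summable:
  fixes A :: "real^'n::finite^'n"
  shows "summable (\<lambda>k. (1 / fact k) *\<^sub>R mat_pow A k)"
proof -
  define m where "m = (\<Sum>a\<in>UNIV. \<Sum>b\<in>UNIV. \<bar>A$a$b\<bar>)"
  define N where "N = real (CARD('n)) * real (CARD('n))"
  have B: "norm ((1 / fact k) *\<^sub>R mat_pow A k) \<le> N * (inverse (fact k) * m ^ k)" for k
  proof -
    have "norm ((1 / fact k) *\<^sub>R mat_pow A k) = (1 / fact k) * norm (mat_pow A k)" by simp
    also have "\<dots> \<le> (1 / fact k) * (\<Sum>a\<in>(UNIV::'n set). \<Sum>b\<in>(UNIV::'n set). m ^ k)"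
      apply (intro mult_left_mono order_trans[OF norm_mat_le] sum_mono)
      using mat_pow_bound unfolding m_def by auto
    also have "\<dots> = N * (inverse (fact k) * m ^ k)" by (simp add: N_def field_simps)
    finally show ?thesis .
  qed
  moreover have S: "summable (\<lambda>k. N * (inverse (fact k) * m ^ k))"
    by (intro summable_mult summable_exp)
  show ?thesis
    by (rule summable_comparison_test'[OF S, of 0]) (rule B)
qed

lemma mat_exp_nth:
  fixes A :: "real^'n::finite^'n"
  shows "mat_exp A $ i $ j = (\<Sum>k. (1 / fact k) * mat_pow A k $ i $ j)"
proof -
  have "(\<lambda>k. (1 / fact k) *\<^sub>R mat_pow A k) sums mat_exp A"
    unfolding mat_exp_def using mat_exp_summable by (rule summable_sums)
  then have "(\<lambda>k. ((1 / fact k) *\<^sub>R mat_pow A k) $ i $ j) sums (mat_exp A $ i $ j)"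
    by (intro sums_vec_nth)
  then show ?thesis by (simp add: sums_iff)
qed


lemma sum_bij_reindex:
  assumes "bij \<pi>"
  shows "(\<Sum>l\<in>UNIV. g l) = (\<Sum>l\<in>UNIV. g (\<pi> l))"
  using sum.reindex_bij_betw[of \<pi> UNIV UNIV g] assms by (simp add: bij_betw_def bij_def)

lemma mat_pow_inv:
  fixes A :: "real^'n::finite^'n"
  assumes "bij \<pi>" "\<forall>u v. A$(\<pi> u)$(\<pi> v) = A$u$v"
  shows "mat_pow A k $ \<pi> u $ \<pi> v = mat_pow A k $ u $ v"
proof (induction k arbitrary: u v)
  case 0
  have "(\<pi> u = \<pi> v) = (u = v)" using assms(1) by (meson bij_def injD)
  then show ?case by (simp add: mat_def)
next
  case (Suc k)
  have "mat_pow A (Suc k) $ \<pi> u $ \<pi> v = (\<Sum>l\<in>UNIV. A$(\<pi> u)$l * mat_pow A k $ l $ \<pi> v)"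
    by (simp add: matrix_matrix_mult_def)
  also have "\<dots> = (\<Sum>l\<in>UNIV. A$(\<pi> u)$(\<pi> l) * mat_pow A k $ (\<pi> l) $ \<pi> v)"
    by (rule sum_bij_reindex[OF assms(1)])
  also have "\<dots> = (\<Sum>l\<in>UNIV. A$u$l * mat_pow A k $ l $ v)"
    using assms(2) Suc.IH by simp
  also have "\<dots> = mat_pow A (Suc k) $ u $ v"
    by (simp add: matrix_matrix_mult_def)
  finally show ?case .
qed

lemma mat_exp_inv:
  fixes A :: "real^'n::finite^'n"
  assumes "bij \<pi>" "\<forall>u v. A$(\<pi> u)$(\<pi> v) = A$u$v"
  shows "mat_exp A $ \<pi> u $ \<pi> v = mat_exp A $ u $ v"
  using mat_pow_inv[OF assms] by (simp add: mat_exp_nth)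

lemma laplacian_inv:
  assumes "graph_automorphism E \<pi>"
  shows "laplacian E $ (\<pi> u) $ (\<pi> v) = laplacian E $ u $ v"
proof -
  have b: "bij \<pi>" and e: "\<And>u v. E u v \<longleftrightarrow> E (\<pi> u) (\<pi> v)"
    using assms unfolding graph_automorphism_def by auto
  have inj: "inj \<pi>" using b bij_def by auto
  have "{w. E (\<pi> u) w} = \<pi> ` {w. E u w}"
  proof safe
    fix w assume "E (\<pi> u) w"
    moreover have "w = \<pi> (inv \<pi> w)" using surj_f_inv_f[OF bij_is_surj[OF b]] by simp
    ultimately have "E u (inv \<pi> w)" using e by metis
    then show "w \<in> \<pi> ` {w. E u w}" using \<open>w = \<pi> (inv \<pi> w)\<close> by blast
  next
    fix w assume "E u w" then show "E (\<pi> u) (\<pi> w)" using e by blast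
  qed
  then have c: "card {w. E (\<pi> u) w} = card {w. E u w}"
    using card_image inj by (metis inj_on_subset subset_UNIV)
  have "(\<pi> u = \<pi> v) = (u = v)" using inj by (meson injD)
  moreover have a: "E (\<pi> u) (\<pi> v) = E u v" using e by simp
  ultimately show ?thesis using c
    by (cases "u = v") (simp_all add: laplacian_def deg_matrix_def adj_matrix_def)
qed

lemma laplacian_rowsum:
  "(\<Sum>j\<in>UNIV. laplacian E $ i $ j) = 0"
proof -
  have "(\<Sum>j\<in>UNIV. (if E i j then 1 else 0::real)) = real (card {j. E i j})"
    by (simp add: sum.If_cases)
  then show ?thesis
    by (simp add: laplacian_def deg_matrix_def adj_matrix_def sum_subtractf)
qed

lemma mat_pow_rowsum:
  fixes B :: "real^'n::finite^'n"
  assumes "\<And>i. (\<Sum>j\<in>UNIV. B $ i $ j) = 0"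
  shows "(\<Sum>j\<in>UNIV. mat_pow B k $ i $ j) = (if k = 0 then 1 else 0)"
proof (induction k arbitrary: i)
  case 0
  then show ?case by (simp add: mat_def)
next
  case (Suc k')
  have "(\<Sum>j\<in>UNIV. mat_pow B (Suc k') $ i $ j)
      = (\<Sum>j\<in>UNIV. \<Sum>l\<in>UNIV. B$i$l * mat_pow B k' $ l $ j)"
    by (simp add: matrix_matrix_mult_def)
  also have "\<dots> = (\<Sum>l\<in>UNIV. B$i$l * (\<Sum>j\<in>UNIV. mat_pow B k' $ l $ j))"
    by (subst sum.swap) (simp add: sum_distrib_left)
  also have "\<dots> = (\<Sum>l\<in>UNIV. B$i$l * (if k' = 0 then 1 else 0))"
    using Suc.IH by simp
  also have "\<dots> = 0" using assms[of i] by (simp add: sum_distrib_right[symmetric])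
  finally show ?case by simp
qed


lemma mat_exp_rowsum:
  fixes B :: "real^'n::finite^'n"
  assumes "\<And>i. (\<Sum>j\<in>UNIV. B $ i $ j) = 0"
  shows "(\<Sum>j\<in>UNIV. mat_exp B $ i $ j) = 1"
proof -
  have sm: "summable (\<lambda>k. (1 / fact k) * mat_pow B k $ i $ j)" for j
  proof -
    have "(\<lambda>k. ((1 / fact k) *\<^sub>R mat_pow B k) $ i $ j) sums (mat_exp B $ i $ j)"
      unfolding mat_exp_def by (intro sums_vec_nth summable_sums mat_exp_summable)
    then show ?thesis by (simp add: sums_iff)
  qed
  have "(\<Sum>j\<in>UNIV. mat_exp B $ i $ j) = (\<Sum>j\<in>UNIV. \<Sum>k. (1 / fact k) * mat_pow B k $ i $ j)"
    by (simp add: mat_exp_nth)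
  also have "\<dots> = (\<Sum>k. \<Sum>j\<in>UNIV. (1 / fact k) * mat_pow B k $ i $ j)"
    by (rule suminf_sum[symmetric]) (rule sm)
  also have "\<dots> = (\<Sum>k. (if k = 0 then 1 else 0))"
  proof (rule suminf_cong)
    fix k
    have "(\<Sum>j\<in>UNIV. (1 / fact k) * mat_pow B k $ i $ j) = (1 / fact k) * (\<Sum>j\<in>UNIV. mat_pow B k $ i $ j)"
      by (simp only: sum_distrib_left)
    then show "(\<Sum>j\<in>UNIV. (1 / fact k) * mat_pow B k $ i $ j) = (if k = 0 then 1 else 0)"
      by (simp add: mat_pow_rowsum[OF assms])
  qed
  also have "\<dots> = 1"
    using sums_single[of 0 "\<lambda>_. 1::real"] by (simp add: sums_iff)
  finally show ?thesis .
qed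

lemma parseval:
  fixes \<phi> :: "'n::finite \<Rightarrow> complex^'n"
  assumes "orthonormal_basis \<phi>"
  shows "(\<Sum>j\<in>UNIV. (cmod (cinner g (\<phi> j)))\<^sup>2) = (\<Sum>k\<in>UNIV. (cmod (g $ k))\<^sup>2)"
proof -
  define U :: "complex^'n^'n" where "U = (\<chi> k j. \<phi> j $ k)"
  define V :: "complex^'n^'n" where "V = (\<chi> j k. cnj (\<phi> j $ k))"
  have "V ** U = mat 1"
    using assms unfolding orthonormal_basis_def cinner_def
    by (simp add: U_def V_def matrix_matrix_mult_def mat_def vec_eq_iff mult.commute)
  then have "U ** V = mat 1" by (simp add: matrix_left_right_inverse)
  then have UV: "(\<Sum>j\<in>UNIV. \<phi> j $ l * cnj (\<phi> j $ k)) = (if l = k then 1 else 0)" for l k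
    unfolding U_def V_def matrix_matrix_mult_def mat_def vec_eq_iff
    by (auto dest!: spec[of _ l] elim!: allE[of _ k])
  have "complex_of_real (\<Sum>j\<in>UNIV. (cmod (cinner g (\<phi> j)))\<^sup>2)
      = (\<Sum>j\<in>UNIV. cinner g (\<phi> j) * cnj (cinner g (\<phi> j)))"
    by (simp only: of_real_sum complex_norm_square)
  also have "\<dots> = (\<Sum>j\<in>UNIV. \<Sum>l\<in>UNIV. \<Sum>k\<in>UNIV. g$k * cnj (g$l) * (\<phi> j $ l * cnj (\<phi> j $ k)))"
    unfolding cinner_def
    by (simp add: sum_product algebra_simps sum_distrib_left sum_distrib_right)
  also have "\<dots> = (\<Sum>l\<in>UNIV. \<Sum>j\<in>UNIV. \<Sum>k\<in>UNIV. g$k * cnj (g$l) * (\<phi> j $ l * cnj (\<phi> j $ k)))"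
    by (rule sum.swap)
  also have "\<dots> = (\<Sum>l\<in>UNIV. \<Sum>k\<in>UNIV. \<Sum>j\<in>UNIV. g$k * cnj (g$l) * (\<phi> j $ l * cnj (\<phi> j $ k)))"
    by (rule sum.cong[OF refl], rule sum.swap)
  also have "\<dots> = (\<Sum>l\<in>UNIV. \<Sum>k\<in>UNIV. g$k * cnj (g$l) * (\<Sum>j\<in>UNIV. \<phi> j $ l * cnj (\<phi> j $ k)))"
    by (simp only: sum_distrib_left)
  also have "\<dots> = (\<Sum>k\<in>UNIV. g$k * cnj (g$k))"
    by (simp add: UV if_distrib sum.delta cong: if_cong)
  also have "\<dots> = complex_of_real (\<Sum>k\<in>UNIV. (cmod (g $ k))\<^sup>2)"
    by (simp only: of_real_sum complex_norm_square)
  finally show ?thesis using of_real_eq_iff by blast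
qed


lemma diag_apply: "cmat_vec (diag_vec x) y $ k = complex_of_real (x $ k) * y $ k"
proof -
  have "(\<Sum>j\<in>UNIV. complex_of_real (if k = j then x$k else 0) * y$j) = (\<Sum>j\<in>UNIV. if k = j then complex_of_real (x$k) * y$j else 0)"
    by (rule sum.cong) auto
  also have "\<dots> = complex_of_real (x$k) * y$k" by simp
  finally show ?thesis by (simp add: cmat_vec_def diag_vec_def)
qed

theorem theorem4p2:
  fixes E :: "'n::finite \<Rightarrow> 'n \<Rightarrow> bool"
    and \<phi> :: "'n \<Rightarrow> complex^'n"
    and t :: real
  assumes "simple_graph E"
    and "graph_connected E"
    and "vertex_transitive E"
    and "orthonormal_basis \<phi>"
    and "\<forall>j. \<exists>\<mu>::complex. cmat_vec (laplacian E) (\<phi> j) = \<mu> *s \<phi> j"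
    and "t \<ge> 0"
  shows "tight_frame
           (\<lambda>(i, j). cmat_vec (diag_vec (column (heat_kernel E t) i)) (\<phi> j))
           (UNIV :: ('n \<times> 'n) set)"
proof -
  define H where "H = heat_kernel E t"
  define r where "r k = (\<Sum>i\<in>UNIV. (H $ k $ i)\<^sup>2)" for k
  obtain k0 :: 'n where True by blast
  have Hinv: "H $ \<pi> u $ \<pi> v = H $ u $ v" if "graph_automorphism E \<pi>" for \<pi> u v
  proof -
    have "bij \<pi>" using that graph_automorphism_def by blast
    moreover have "\<forall>u v. ((- t) *\<^sub>R laplacian E) $ \<pi> u $ \<pi> v = ((- t) *\<^sub>R laplacian E) $ u $ v"
      using laplacian_inv[OF that] by simp
    ultimately show ?thesis unfolding H_def heat_kernel_def by (rule mat_exp_inv)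
  qed
  have rconst: "r k = r k0" for k
  proof -
    obtain \<pi> where p: "graph_automorphism E \<pi>" "\<pi> k0 = k"
      using assms(3) unfolding vertex_transitive_def by blast
    have "r k = (\<Sum>i\<in>UNIV. (H $ \<pi> k0 $ \<pi> i)\<^sup>2)"
      unfolding r_def using p(2) sum_bij_reindex[of \<pi>] p(1)
      unfolding graph_automorphism_def by blast
    also have "\<dots> = r k0" unfolding r_def using Hinv[OF p(1)] by simp
    finally show ?thesis .
  qed
  have rs: "(\<Sum>j\<in>UNIV. H $ k0 $ j) = 1"
    unfolding H_def heat_kernel_def
    by (rule mat_exp_rowsum) (simp add: sum_negf sum_distrib_left[symmetric] laplacian_rowsum)
  then obtain i0 where "H $ k0 $ i0 \<noteq> 0" by (metis (no_types, lifting) sum.neutral zero_neq_one)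
  then have rpos: "r k0 > 0"
    unfolding r_def by (intro sum_pos2[of UNIV i0]) auto
  show ?thesis
    unfolding tight_frame_def
  proof (intro exI conjI allI)
    show "r k0 > 0" by (rule rpos)
    fix f :: "complex^'n"
    define g where "g i = (\<chi> k. complex_of_real (H $ k $ i) * f $ k)" for i
    have ci: "cinner f (cmat_vec (diag_vec (column H i)) (\<phi> j)) = cinner (g i) (\<phi> j)" for i j
      unfolding cinner_def g_def by (simp add: diag_apply column_def mult_ac)
    have "(\<Sum>k\<in>(UNIV::('n\<times>'n) set). (cmod (cinner f ((\<lambda>(i, j). cmat_vec (diag_vec (column (heat_kernel E t) i)) (\<phi> j)) k)))\<^sup>2)
        = (\<Sum>(i,j)\<in>UNIV \<times> UNIV. (cmod (cinner (g i) (\<phi> j)))\<^sup>2)"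
      by (simp add: ci H_def[symmetric] case_prod_beta)
    also have "\<dots> = (\<Sum>i\<in>UNIV. \<Sum>j\<in>UNIV. (cmod (cinner (g i) (\<phi> j)))\<^sup>2)"
      by (rule sum.cartesian_product[symmetric])
    also have "\<dots> = (\<Sum>i\<in>UNIV. \<Sum>k\<in>UNIV. (cmod (g i $ k))\<^sup>2)"
      using parseval[OF assms(4)] by simp
    also have "\<dots> = (\<Sum>i\<in>UNIV. \<Sum>k\<in>UNIV. (H $ k $ i)\<^sup>2 * (cmod (f $ k))\<^sup>2)"
      by (simp add: g_def norm_mult power_mult_distrib)
    also have "\<dots> = (\<Sum>k\<in>UNIV. r k * (cmod (f $ k))\<^sup>2)"
      by (subst sum.swap) (simp add: r_def sum_distrib_right)
    also have "\<dots> = (\<Sum>k\<in>UNIV. r k0 * (cmod (f $ k))\<^sup>2)"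
      by (intro sum.cong refl) (metis rconst)
    also have "\<dots> = r k0 * (\<Sum>k\<in>UNIV. (cmod (f $ k))\<^sup>2)"
      by (simp add: sum_distrib_left)
    also have "\<dots> = r k0 * (cnorm f)\<^sup>2"
      by (simp add: cnorm_def sum_nonneg)
    finally show "(\<Sum>k\<in>(UNIV::('n\<times>'n) set). (cmod (cinner f ((\<lambda>(i, j). cmat_vec (diag_vec (column (heat_kernel E t) i)) (\<phi> j)) k)))\<^sup>2) = r k0 * (cnorm f)\<^sup>2" .
  qed
qed

end
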